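(* Let $T$ be a complete theory with monster model $\mathcal{U}$, $A\subseteq B$ small subsets of $\mathcal{U}$, $\mu\in\mathfrak{M}_x(\mathcal{U})$, $\nu\in\mathfrak{M}_y(\mathcal{U})$. If $\mu\geq_{\mathbb{E},A}\nu$, then $\mu\geq_{\mathbb{E},B}\nu$.
   Context: For $C\subseteq\mathcal{U}$, $\mathcal{L}_x(C)$ is the Boolean algebra of formulas in $x$ with parameters from $C$ modulo $T$, embedded in $\mathcal{L}_{xy}(C)$ via $\varphi(x)\mapsto\varphi(x)\wedge y=y$; $\mathfrak{M}_x(C)$ is the set of finitely additive probability measures on $\mathcal{L}_x(C)$. For $\omega\in\mathfrak{M}_{xy}(C)$, $\pi_x(\omega)(\varphi(x))=\omega(\varphi(x)\wedge y=y)$ (similarly $\pi_y$); $\omega|_D$ is restriction. $\mu\geq_{\mathbb{E},A}\nu$ means there is $\lambda\in\mathfrak{M}_{xy}(A)$ with $\pi_x(\lambda)=\mu|_A$ such that every $\omega\in\mathfrak{M}_{xy}(\mathcal{U})$ with $\omega|_A=\lambda$ and $\pi_x(\omega)=\mu$ satisfies $\pi_y(\omega)=\nu$. *)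

theory Defs
  imports Complex_Main
begin

text \<open>Function and relation symbols are applied to argument lists of any length,
i.e. a symbol together with a length plays the role of a symbol of that arity.\<close>

datatype 'f trm = Var nat | Fn 'f "'f trm list"

datatype ('f, 'r) fm =
    FF
  | Eq "'f trm" "'f trm"
  | Rel 'r "'f trm list"
  | Neg "('f, 'r) fm"
  | Conj "('f, 'r) fm" "('f, 'r) fm"
  | Ex nat "('f, 'r) fm"

datatype ('f, 'r, 'u) struct =
  Struct (fint: "'f \<Rightarrow> 'u list \<Rightarrow> 'u") (rint: "'r \<Rightarrow> 'u list \<Rightarrow> bool")

fun teval :: "('f, 'r, 'u) struct \<Rightarrow> (nat \<Rightarrow> 'u) \<Rightarrow> 'f trm \<Rightarrow> 'u" where
  "teval M e (Var i) = e i"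
| "teval M e (Fn f ts) = fint M f (map (teval M e) ts)"

fun sat :: "('f, 'r, 'u) struct \<Rightarrow> (nat \<Rightarrow> 'u) \<Rightarrow> ('f, 'r) fm \<Rightarrow> bool" where
  "sat M e FF = False"
| "sat M e (Eq s t) = (teval M e s = teval M e t)"
| "sat M e (Rel r ts) = rint M r (map (teval M e) ts)"
| "sat M e (Neg \<phi>) = (\<not> sat M e \<phi>)"
| "sat M e (Conj \<phi> \<psi>) = (sat M e \<phi> \<and> sat M e \<psi>)"
| "sat M e (Ex v \<phi>) = (\<exists>a. sat M (e(v := a)) \<phi>)"

fun tvars :: "'f trm \<Rightarrow> nat set" where
  "tvars (Var i) = {i}"
| "tvars (Fn f ts) = (\<Union>t\<in>set ts. tvars t)"

fun fvars :: "('f, 'r) fm \<Rightarrow> nat set" where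
  "fvars FF = {}"
| "fvars (Eq s t) = tvars s \<union> tvars t"
| "fvars (Rel r ts) = (\<Union>t\<in>set ts. tvars t)"
| "fvars (Neg \<phi>) = fvars \<phi>"
| "fvars (Conj \<phi> \<psi>) = fvars \<phi> \<union> fvars \<psi>"
| "fvars (Ex v \<phi>) = fvars \<phi> - {v}"

text \<open>A formula with
parameters is a pair of a formula and an environment that sends every free variable
other than 0 into C.\<close>

definition saturated :: "('f, 'r, 'u) struct \<Rightarrow> 'k set \<Rightarrow> bool" where
  "saturated M K \<longleftrightarrow>
     (\<forall>(C :: 'u set) (p :: (('f, 'r) fm \<times> (nat \<Rightarrow> 'u)) set).
        (card_of C, card_of K) \<in> ordLess \<longrightarrow>
        (\<forall>(\<phi>, e)\<in>p. \<forall>i\<in>fvars \<phi>. i \<noteq> 0 \<longrightarrow> e i \<in> C) \<longrightarrow>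
        (\<forall>F. finite F \<longrightarrow> F \<subseteq> p \<longrightarrow> (\<exists>a. \<forall>(\<phi>, e)\<in>F. sat M (e(0 := a)) \<phi>)) \<longrightarrow>
        (\<exists>a. \<forall>(\<phi>, e)\<in>p. sat M (e(0 := a)) \<phi>))"

definition automorphism :: "('f, 'r, 'u) struct \<Rightarrow> ('u \<Rightarrow> 'u) \<Rightarrow> bool" where
  "automorphism M \<sigma> \<longleftrightarrow> bij \<sigma> \<and>
     (\<forall>f as. \<sigma> (fint M f as) = fint M f (map \<sigma> as)) \<and>
     (\<forall>r as. rint M r (map \<sigma> as) = rint M r as)"

definition elementary_on :: "('f, 'r, 'u) struct \<Rightarrow> 'u set \<Rightarrow> ('u \<Rightarrow> 'u) \<Rightarrow> bool" where
  "elementary_on M D h \<longleftrightarrow>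
     (\<forall>(\<phi> :: ('f, 'r) fm) e. (\<forall>i\<in>fvars \<phi>. e i \<in> D) \<longrightarrow> (sat M e \<phi> \<longleftrightarrow> sat M (h \<circ> e) \<phi>))"

definition strongly_homogeneous :: "('f, 'r, 'u) struct \<Rightarrow> 'k set \<Rightarrow> bool" where
  "strongly_homogeneous M K \<longleftrightarrow>
     (\<forall>D h. (card_of D, card_of K) \<in> ordLess \<longrightarrow> elementary_on M D h \<longrightarrow>
        (\<exists>\<sigma>. automorphism M \<sigma> \<and> (\<forall>d\<in>D. \<sigma> d = h d)))"

text \<open>M is a monster model (of its complete theory T = Th(M)) with respect to the
cardinal |K|: |K| is uncountable and exceeds the size of the language, and M is
|K|-saturated and strongly |K|-homogeneous.\<close>

definition monster :: "('f, 'r, 'u) struct \<Rightarrow> 'k set \<Rightarrow> bool" where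
  "monster M K \<longleftrightarrow>
     (card_of (UNIV :: ('f + 'r + nat) set), card_of K) \<in> ordLess \<and>
     saturated M K \<and> strongly_homogeneous M K"

definition small :: "'k set \<Rightarrow> 'u set \<Rightarrow> bool" where
  "small K C \<longleftrightarrow> (card_of C, card_of K) \<in> ordLess"

text \<open>A tuple of variables x of length n is rendered as the variables 0..n-1;
L_x(C) (formulas in x with parameters from C, modulo T) is rendered as the Boolean
algebra of C-definable subsets of U^n (n-tuples as lists of length n).\<close>

definition tuples :: "nat \<Rightarrow> 'u list set" where
  "tuples n = {a. length a = n}"

definition env :: "nat \<Rightarrow> 'u list \<Rightarrow> (nat \<Rightarrow> 'u) \<Rightarrow> nat \<Rightarrow> 'u" where
  "env n a e i = (if i < n then a ! i else e i)"

definition defin :: "('f, 'r, 'u) struct \<Rightarrow> nat \<Rightarrow> 'u set \<Rightarrow> 'u list set set" where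
  "defin M n C = {S. \<exists>(\<phi> :: ('f, 'r) fm) e.
      (\<forall>i\<in>fvars \<phi>. n \<le> i \<longrightarrow> e i \<in> C) \<and> S = {a \<in> tuples n. sat M (env n a e) \<phi>}}"

definition fa_prob :: "'a set set \<Rightarrow> 'a set \<Rightarrow> ('a set \<Rightarrow> real) \<Rightarrow> bool" where
  "fa_prob Alg X \<mu> \<longleftrightarrow> \<mu> X = 1 \<and> (\<forall>S\<in>Alg. 0 \<le> \<mu> S) \<and>
     (\<forall>S\<in>Alg. \<forall>T\<in>Alg. S \<inter> T = {} \<longrightarrow> \<mu> (S \<union> T) = \<mu> S + \<mu> T)"

definition keisler :: "('f, 'r, 'u) struct \<Rightarrow> nat \<Rightarrow> 'u set \<Rightarrow> ('u list set \<Rightarrow> real) \<Rightarrow> bool" where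
  "keisler M n C \<mu> \<longleftrightarrow> fa_prob (defin M n C) (tuples n) \<mu>"

definition agree :: "'a set set \<Rightarrow> ('a set \<Rightarrow> real) \<Rightarrow> ('a set \<Rightarrow> real) \<Rightarrow> bool" where
  "agree Alg \<mu> \<nu> \<longleftrightarrow> (\<forall>S\<in>Alg. \<mu> S = \<nu> S)"

text \<open>Marginals: in the xy-sort, x = variables 0..n-1, y = variables n..n+m-1.
phi(x) corresponds to phi(x) /\ y=y, psi(y) to x=x /\ psi(y).\<close>
definition pi_x :: "nat \<Rightarrow> nat \<Rightarrow> ('u list set \<Rightarrow> real) \<Rightarrow> 'u list set \<Rightarrow> real" where
  "pi_x n m \<omega> S = \<omega> {a \<in> tuples (n + m). take n a \<in> S}"

definition pi_y :: "nat \<Rightarrow> nat \<Rightarrow> ('u list set \<Rightarrow> real) \<Rightarrow> 'u list set \<Rightarrow> real" where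
  "pi_y n m \<omega> S = \<omega> {a \<in> tuples (n + m). drop n a \<in> S}"

definition geE :: "('f, 'r, 'u) struct \<Rightarrow> nat \<Rightarrow> nat \<Rightarrow> 'u set \<Rightarrow>
    ('u list set \<Rightarrow> real) \<Rightarrow> ('u list set \<Rightarrow> real) \<Rightarrow> bool" where
  "geE M n m A \<mu> \<nu> \<longleftrightarrow>
     (\<exists>lam. keisler M (n + m) A lam \<and> agree (defin M n A) (pi_x n m lam) \<mu> \<and>
        (\<forall>\<omega>. keisler M (n + m) UNIV \<omega> \<longrightarrow> agree (defin M (n + m) A) \<omega> lam \<longrightarrow>
             agree (defin M n UNIV) (pi_x n m \<omega>) \<mu> \<longrightarrow>
             agree (defin M m UNIV) (pi_y n m \<omega>) \<nu>))"

end

theory Submission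
  imports Defs "HOL-Analysis.Analysis"
begin

definition Nb :: "('i \<Rightarrow> 'j \<Rightarrow> bool) \<Rightarrow> 'j set \<Rightarrow> 'i set \<Rightarrow> 'j set" where
  "Nb E J S = {j\<in>J. \<exists>i\<in>S. E i j}"

definition hall_ok :: "('i \<Rightarrow> 'j \<Rightarrow> bool) \<Rightarrow> 'i set \<Rightarrow> 'j set \<Rightarrow> ('i \<Rightarrow> real) \<Rightarrow> ('j \<Rightarrow> real) \<Rightarrow> bool" where
  "hall_ok E I J a b \<longleftrightarrow> finite I \<and> finite J \<and> (\<forall>i\<in>I. 0 \<le> a i) \<and> (\<forall>j\<in>J. 0 \<le> b j)
     \<and> sum a I = sum b J \<and> (\<forall>S\<subseteq>I. sum a S \<le> sum b (Nb E J S))"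

definition flow_ok :: "('i \<Rightarrow> 'j \<Rightarrow> bool) \<Rightarrow> 'i set \<Rightarrow> 'j set \<Rightarrow> ('i \<Rightarrow> real) \<Rightarrow> ('j \<Rightarrow> real) \<Rightarrow> ('i \<Rightarrow> 'j \<Rightarrow> real) \<Rightarrow> bool" where
  "flow_ok E I J a b w \<longleftrightarrow> (\<forall>i j. 0 \<le> w i j) \<and> (\<forall>i j. w i j \<noteq> 0 \<longrightarrow> E i j \<and> i \<in> I \<and> j \<in> J)
     \<and> (\<forall>i\<in>I. sum (w i) J = a i) \<and> (\<forall>j\<in>J. sum (\<lambda>i. w i j) I = b j)"

lemma flow_sum_outside:
  assumes "flow_ok E I J a b w" "finite J'" "J \<subseteq> J'"
  shows "sum (w i) J' = sum (w i) J"
proof -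
  have "sum (w i) J' = sum (w i) J + sum (w i) (J' - J)"
    by (metis assms(2,3) sum.subset_diff add.commute)
  moreover have "sum (w i) (J' - J) = 0"
    using assms(1) unfolding flow_ok_def by (intro sum.neutral) blast
  ultimately show ?thesis by simp
qed

lemma remove_I:
  assumes h: "hall_ok E I J a b" and i: "i \<in> I" "a i = 0"
    and f: "flow_ok E (I - {i}) J a b w"
  shows "flow_ok E I J a b w"
proof -
  have fin: "finite I" using h hall_ok_def by blast
  have wi: "w i j = 0" for j using f unfolding flow_ok_def by blast
  have f1: "\<forall>i j. 0 \<le> w i j" "\<forall>i j. w i j \<noteq> 0 \<longrightarrow> E i j \<and> i \<in> I - {i0} \<and> j \<in> J"
     "\<forall>i\<in>I - {i0}. sum (w i) J = a i" "\<forall>j\<in>J. sum (\<lambda>i. w i j) (I - {i0}) = b j" if "i0 = i" for i0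
    using f that unfolding flow_ok_def by auto
  show ?thesis unfolding flow_ok_def
  proof (intro conjI ballI allI impI)
    show "0 \<le> w i' j" for i' j using f1(1)[OF refl] by blast
    show "E i' j" "i' \<in> I" "j \<in> J" if "w i' j \<noteq> 0" for i' j using f1(2)[OF refl] that by blast+
    show "sum (w i') J = a i'" if "i' \<in> I" for i'
    proof (cases "i' = i")
      case True
      then show ?thesis using wi i by simp
    next
      case False
      then show ?thesis using f1(3)[OF refl] that by blast
    qed
    show "(\<Sum>i\<in>I. w i j) = b j" if "j \<in> J" for j
    proof -
      have "(\<Sum>i\<in>I. w i j) = w i j + (\<Sum>i\<in>I - {i}. w i j)"
        using fin i by (simp add: sum.remove)
      then show ?thesis using f1(4)[OF refl] that wi[of j] by simp
    qed
  qed
qed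

lemma remove_J:
  assumes h: "hall_ok E I J a b" and j: "j \<in> J" "b j = 0"
    and f: "flow_ok E I (J - {j}) a b w"
  shows "flow_ok E I J a b w"
proof -
  have fin: "finite J" using h hall_ok_def by blast
  have wj: "w i j = 0" for i using f unfolding flow_ok_def by blast
  have f1: "\<forall>i j. 0 \<le> w i j" "\<forall>i j. w i j \<noteq> 0 \<longrightarrow> E i j \<and> i \<in> I \<and> j \<in> J - {j0}"
     "\<forall>i\<in>I. sum (w i) (J - {j0}) = a i" "\<forall>j\<in>J - {j0}. sum (\<lambda>i. w i j) I = b j" if "j0 = j" for j0
    using f that unfolding flow_ok_def by auto
  show ?thesis unfolding flow_ok_def
  proof (intro conjI ballI allI impI)
    show "0 \<le> w i' j" for i' j using f1(1)[OF refl] by blast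
    show "E i' j'" "i' \<in> I" "j' \<in> J" if "w i' j' \<noteq> 0" for i' j' using f1(2)[OF refl] that by blast+
    show "(\<Sum>i\<in>I. w i j') = b j'" if "j' \<in> J" for j'
    proof (cases "j' = j")
      case True
      then show ?thesis using wj j by simp
    next
      case False
      then show ?thesis using f1(4)[OF refl] that by blast
    qed
    show "sum (w i) J = a i" if "i \<in> I" for i
    proof -
      have "sum (w i) J = w i j + sum (w i) (J - {j})"
        using fin j by (simp add: sum.remove)
      then show ?thesis using f1(3)[OF refl] that wj[of i] by simp
    qed
  qed
qed

lemma hall_remove_I:
  assumes h: "hall_ok E I J a b" and i: "i \<in> I" "a i = 0"
  shows "hall_ok E (I - {i}) J a b"
  using h i unfolding hall_ok_def by (auto simp: sum_diff1)

lemma hall_remove_J: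
  assumes h: "hall_ok E I J a b" and j: "j \<in> J" "b j = 0"
  shows "hall_ok E I (J - {j}) a b"
proof -
  have fin: "finite J" using h unfolding hall_ok_def by blast
  have N: "Nb E (J - {j}) S = Nb E J S - {j}" for S unfolding Nb_def by auto
  have s: "sum b (X - {j}) = sum b X" if "X \<subseteq> J" for X
    using j that fin by (metis add_0 finite_subset sum.remove sum_diff1 diff_zero)
  have NJ: "Nb E J S \<subseteq> J" for S unfolding Nb_def by auto
  show ?thesis unfolding hall_ok_def N
  proof (intro conjI ballI allI impI)
    show "finite I" "finite (J - {j})" using h fin unfolding hall_ok_def by auto
    show "0 \<le> a i" if "i \<in> I" for i using h that unfolding hall_ok_def by blast
    show "0 \<le> b i" if "i \<in> J - {j}" for i using h that unfolding hall_ok_def by blast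
    show "sum a I = sum b (J - {j})" using h s[of J] unfolding hall_ok_def by simp
    show "sum a S \<le> sum b (Nb E J S - {j})" if "S \<subseteq> I" for S
      using h that s[OF NJ] unfolding hall_ok_def by simp
  qed
qed


lemma sum_upd:
  fixes f :: "'a \<Rightarrow> real"
  assumes "finite S"
  shows "sum (f(x := v)) S = sum f S + (if x \<in> S then v - f x else 0)"
proof (cases "x \<in> S")
  case True
  have "sum (f(x := v)) S = v + sum (f(x := v)) (S - {x})" using assms True by (simp add: sum.remove)
  also have "sum (f(x := v)) (S - {x}) = sum f (S - {x})" by (intro sum.cong) auto
  also have "sum f S = f x + sum f (S - {x})" using assms True by (simp add: sum.remove)
  ultimately show ?thesis using True by (simp add: algebra_simps)
next
  case False
  then have "sum (f(x := v)) S = sum f S" by (intro sum.cong) auto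
  then show ?thesis using False by simp
qed

lemma Nb_mono: "S \<subseteq> T \<Longrightarrow> Nb E J S \<subseteq> Nb E J T" unfolding Nb_def by auto
lemma Nb_sub: "Nb E J S \<subseteq> J" unfolding Nb_def by auto

lemma hall_okD:
  assumes "hall_ok E I J a b"
  shows "finite I" "finite J" "\<And>i. i \<in> I \<Longrightarrow> 0 \<le> a i" "\<And>j. j \<in> J \<Longrightarrow> 0 \<le> b j"
    "sum a I = sum b J" "\<And>S. S \<subseteq> I \<Longrightarrow> sum a S \<le> sum b (Nb E J S)"
  using assms unfolding hall_ok_def by auto

lemma hall_okI:
  assumes "finite I" "finite J" "\<And>i. i \<in> I \<Longrightarrow> 0 \<le> a i" "\<And>j. j \<in> J \<Longrightarrow> 0 \<le> b j"
    "sum a I = sum b J" "\<And>S. S \<subseteq> I \<Longrightarrow> sum a S \<le> sum b (Nb E J S)"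
  shows "hall_ok E I J a b"
  using assms unfolding hall_ok_def by auto

lemma hall_split1:
  assumes h: "hall_ok E I J a b" and S: "S \<subseteq> I" "sum a S = sum b (Nb E J S)"
  shows "hall_ok E S (Nb E J S) a b"
proof (rule hall_okI)
  note hh = hall_okD[OF h]
  have N: "Nb E (Nb E J S) T = Nb E J T" if "T \<subseteq> S" for T using that unfolding Nb_def by blast
  show "finite S" using hh(1) S(1) by (rule finite_subset[rotated])
  show "finite (Nb E J S)" using hh(2) Nb_sub by (rule finite_subset[rotated])
  show "0 \<le> a i" if "i \<in> S" for i using hh(3) that S by blast
  show "0 \<le> b j" if "j \<in> Nb E J S" for j using hh(4) that Nb_sub[of E J S] by blast
  show "sum a S = sum b (Nb E J S)" by fact
  show "sum a T \<le> sum b (Nb E (Nb E J S) T)" if "T \<subseteq> S" for T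
  proof -
    have "T \<subseteq> I" using that S by blast
    then have "sum a T \<le> sum b (Nb E J T)" using hh(6) by blast
    then show ?thesis using N[OF that] by simp
  qed
qed

lemma hall_split2:
  assumes h: "hall_ok E I J a b" and S: "S \<subseteq> I" "sum a S = sum b (Nb E J S)"
  shows "hall_ok E (I - S) (J - Nb E J S) a b"
proof (rule hall_okI)
  note hh = hall_okD[OF h]
  have N: "Nb E (J - Nb E J S) T = Nb E J (T \<union> S) - Nb E J S" for T unfolding Nb_def by auto
  show "finite (I - S)" "finite (J - Nb E J S)" using hh by auto
  show "0 \<le> a i" if "i \<in> I - S" for i using hh(3) that by blast
  show "0 \<le> b j" if "j \<in> J - Nb E J S" for j using hh(4) that by blast
  have "sum a (I - S) = sum a I - sum a S" using hh(1) S by (simp add: sum_diff)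
  moreover have "sum b (J - Nb E J S) = sum b J - sum b (Nb E J S)" using hh(2) Nb_sub[of E J S] by (simp add: sum_diff)
  ultimately show "sum a (I - S) = sum b (J - Nb E J S)" using hh(5) S by simp
  show "sum a T \<le> sum b (Nb E (J - Nb E J S) T)" if T: "T \<subseteq> I - S" for T
  proof -
    have fT: "finite T" "finite S" using finite_subset[of T I] finite_subset[of S I] hh(1) T S by blast+
    have "sum a (T \<union> S) = sum a T + sum a S" using fT T by (intro sum.union_disjoint) auto
    moreover have "sum b (Nb E J (T \<union> S) - Nb E J S) = sum b (Nb E J (T \<union> S)) - sum b (Nb E J S)"
      using hh(2) Nb_sub[of E J "T \<union> S"] Nb_mono[of S "T \<union> S" E J]
      by (intro sum_diff) (auto intro: finite_subset)
    moreover have "sum a (T \<union> S) \<le> sum b (Nb E J (T \<union> S))"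
    proof -
      have "T \<union> S \<subseteq> I" using T S by blast
      then show ?thesis using hh(6) by blast
    qed
    ultimately show ?thesis unfolding N using S by simp
  qed
qed

lemma flow_zero_row: "flow_ok E I J a b w \<Longrightarrow> i \<notin> I \<Longrightarrow> w i j = 0"
  unfolding flow_ok_def by blast
lemma flow_zero_col: "flow_ok E I J a b w \<Longrightarrow> j \<notin> J \<Longrightarrow> w i j = 0"
  unfolding flow_ok_def by blast

lemma sum_outside_zero:
  assumes "finite B" "A \<subseteq> B" "\<And>x. x \<in> B - A \<Longrightarrow> f x = (0::real)"
  shows "sum f B = sum f A"
  using assms by (intro sum.mono_neutral_right) auto

lemma flow_combine:
  assumes h: "hall_ok E I J a b" and S: "S \<subseteq> I"
   and f1: "flow_ok E S (Nb E J S) a b w1" and f2: "flow_ok E (I - S) (J - Nb E J S) a b w2"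
  shows "flow_ok E I J a b (\<lambda>i j. if i \<in> S then w1 i j else w2 i j)"
proof -
  have fI: "finite I" "finite J" using h unfolding hall_ok_def by auto
  have fS: "finite S" using fI(1) S by (rule finite_subset[rotated])
  show ?thesis unfolding flow_ok_def
  proof (intro conjI allI impI ballI)
    show "0 \<le> (if i \<in> S then w1 i j else w2 i j)" for i j using f1 f2 unfolding flow_ok_def by auto
    show "E i j" "i \<in> I" "j \<in> J" if "(if i \<in> S then w1 i j else w2 i j) \<noteq> 0" for i j
      using that f1 f2 S Nb_sub[of E J S] unfolding flow_ok_def by (auto split: if_splits)
    show "(\<Sum>j\<in>J. if i \<in> S then w1 i j else w2 i j) = a i" if i: "i \<in> I" for i
    proof (cases "i \<in> S")
      case True
      then have "(\<Sum>j\<in>J. w1 i j) = (\<Sum>j\<in>Nb E J S. w1 i j)"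
        using fI Nb_sub[of E J S] flow_zero_col[OF f1] by (intro sum_outside_zero) auto
      then show ?thesis using True f1 unfolding flow_ok_def by simp
    next
      case False
      then have "(\<Sum>j\<in>J. w2 i j) = (\<Sum>j\<in>J - Nb E J S. w2 i j)"
        using fI flow_zero_col[OF f2] by (intro sum_outside_zero) auto
      then show ?thesis using False i f2 unfolding flow_ok_def by simp
    qed
    show "(\<Sum>i\<in>I. if i \<in> S then w1 i j else w2 i j) = b j" if j: "j \<in> J" for j
    proof -
      have "(\<Sum>i\<in>I. if i \<in> S then w1 i j else w2 i j) = (\<Sum>i\<in>S. w1 i j) + (\<Sum>i\<in>I - S. w2 i j)"
      proof -
        have "(\<Sum>i\<in>I. if i \<in> S then w1 i j else w2 i j) = (\<Sum>i\<in>S. if i \<in> S then w1 i j else w2 i j) + (\<Sum>i\<in>I - S. if i \<in> S then w1 i j else w2 i j)"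
          using fI S by (metis (no_types, lifting) sum.subset_diff add.commute)
        then show ?thesis by simp
      qed
      moreover have "(\<Sum>i\<in>S. w1 i j) = (if j \<in> Nb E J S then b j else 0)"
        using f1 flow_zero_col[OF f1, of j] unfolding flow_ok_def by auto
      moreover have "(\<Sum>i\<in>I - S. w2 i j) = (if j \<in> Nb E J S then 0 else b j)"
        using f2 flow_zero_col[OF f2, of j] j unfolding flow_ok_def by auto
      ultimately show ?thesis by simp
    qed
  qed
qed

lemma hall_push:
  assumes h: "hall_ok E I J a b" and ij: "i0 \<in> I" "j0 \<in> J" "E i0 j0"
    and t: "0 \<le> t" "t \<le> a i0" "t \<le> b j0"
    and slack: "\<And>S. S \<subseteq> I \<Longrightarrow> i0 \<notin> S \<Longrightarrow> j0 \<in> Nb E J S \<Longrightarrow> t \<le> sum b (Nb E J S) - sum a S"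
  shows "hall_ok E I J (a(i0 := a i0 - t)) (b(j0 := b j0 - t))"
proof -
  have fI: "finite I" "finite J" using h unfolding hall_ok_def by auto
  show ?thesis unfolding hall_ok_def
  proof (intro conjI ballI allI impI)
    show "finite I" "finite J" by fact+
    show "0 \<le> (a(i0 := a i0 - t)) i" if "i \<in> I" for i using h that t unfolding hall_ok_def by auto
    show "0 \<le> (b(j0 := b j0 - t)) i" if "i \<in> J" for i using h that t unfolding hall_ok_def by auto
    show "sum (a(i0 := a i0 - t)) I = sum (b(j0 := b j0 - t)) J"
      using hall_okD(5)[OF h] ij sum_upd[OF fI(1), of a i0 "a i0 - t"] sum_upd[OF fI(2), of b j0 "b j0 - t"] by simp
    show "sum (a(i0 := a i0 - t)) S \<le> sum (b(j0 := b j0 - t)) (Nb E J S)" if S: "S \<subseteq> I" for S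
    proof -
      have fS: "finite S" "finite (Nb E J S)" using fI S Nb_sub[of E J S] finite_subset by blast+
      have H: "sum a S \<le> sum b (Nb E J S)" using h S unfolding hall_ok_def by blast
      show ?thesis
      proof (cases "i0 \<in> S")
        case True
        then have "j0 \<in> Nb E J S" using ij unfolding Nb_def by blast
        then show ?thesis using True H sum_upd[OF fS(1), of a i0 "a i0 - t"] sum_upd[OF fS(2), of b j0 "b j0 - t"] by simp
      next
        case False
        show ?thesis
        proof (cases "j0 \<in> Nb E J S")
          case True
          then show ?thesis using slack[OF S False True] False sum_upd[OF fS(1), of a i0 "a i0 - t"] sum_upd[OF fS(2), of b j0 "b j0 - t"] by simp
        next
          case F2: False
          then show ?thesis using False F2 H sum_upd[OF fS(1), of a i0 "a i0 - t"] sum_upd[OF fS(2), of b j0 "b j0 - t"] by simp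
        qed
      qed
    qed
  qed
qed

lemma flow_push:
  assumes f: "flow_ok E I J (a(i0 := a i0 - t)) (b(j0 := b j0 - t)) w"
    and ij: "i0 \<in> I" "j0 \<in> J" "E i0 j0" and t: "0 \<le> t" and fI: "finite I" "finite J"
  shows "flow_ok E I J a b (w(i0 := (w i0)(j0 := w i0 j0 + t)))"
  unfolding flow_ok_def
proof (intro conjI allI impI ballI)
  show "0 \<le> (w(i0 := (w i0)(j0 := w i0 j0 + t))) i j" for i j using f t unfolding flow_ok_def by auto
  show "E i j" "i \<in> I" "j \<in> J" if "(w(i0 := (w i0)(j0 := w i0 j0 + t))) i j \<noteq> 0" for i j
    using that f ij unfolding flow_ok_def by (auto split: if_splits)
  show "sum ((w(i0 := (w i0)(j0 := w i0 j0 + t))) i) J = a i" if i: "i \<in> I" for i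
  proof (cases "i = i0")
    case True
    have "sum (w i0) J = a i0 - t" using f ij unfolding flow_ok_def by force
    then show ?thesis using True fI ij sum_upd[OF fI(2), of "w i0" j0 "w i0 j0 + t"] by simp
  next
    case False
    then show ?thesis using f i unfolding flow_ok_def by auto
  qed
  show "(\<Sum>i\<in>I. (w(i0 := (w i0)(j0 := w i0 j0 + t))) i j) = b j" if j: "j \<in> J" for j
  proof -
    have e: "(\<lambda>i. (w(i0 := (w i0)(j0 := w i0 j0 + t))) i j) = (\<lambda>i. w i j)(i0 := w i0 j + (if j = j0 then t else 0))"
      by auto
    have "(\<Sum>i\<in>I. w i j) = (b(j0 := b j0 - t)) j" using f j unfolding flow_ok_def by blast
    then show ?thesis unfolding e using fI ij sum_upd[OF fI(1), of "\<lambda>i. w i j" i0 "w i0 j + (if j = j0 then t else 0)"] by (simp split: if_splits)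
  qed
qed


lemma transport_aux:
  "card I + card J = k \<Longrightarrow> hall_ok E I J a b \<Longrightarrow> \<exists>w. flow_ok E I J a b w"
proof (induction k arbitrary: I J a b rule: less_induct)
  case (less k)
  have IH: "\<And>I' J' a' b'. card I' + card J' < card I + card J \<Longrightarrow> hall_ok E I' J' a' b' \<Longrightarrow> \<exists>w. flow_ok E I' J' a' b' w"
    using less.IH less.prems(1) by blast
  have h: "hall_ok E I J a b" by (rule less.prems(2))
  note hh = hall_okD[OF h]
  have reduce: "\<exists>w. flow_ok E I J a' b' w" if h': "hall_ok E I J a' b'" and
     z: "(\<exists>i\<in>I. a' i = 0) \<or> (\<exists>j\<in>J. b' j = 0) \<or> (\<exists>S. S \<subseteq> I \<and> S \<noteq> {} \<and> S \<noteq> I \<and> sum a' S = sum b' (Nb E J S))" for a' b'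
  proof -
    note hh' = hall_okD[OF h']
    from z consider (a) i where "i\<in>I" "a' i = 0" | (b) j where "j\<in>J" "b' j = 0"
      | (c) S where "S \<subseteq> I" "S \<noteq> {}" "S \<noteq> I" "sum a' S = sum b' (Nb E J S)" by blast
    then show ?thesis
    proof cases
      case a
      have "card (I - {i}) < card I" using hh'(1) a(1) by (rule card_Diff1_less)
      then have "card (I - {i}) + card J < card I + card J" by simp
      then obtain w where "flow_ok E (I - {i}) J a' b' w" using IH hall_remove_I[OF h' a] by blast
      then show ?thesis using remove_I[OF h' a] by blast
    next
      case b
      have "card (J - {j}) < card J" using hh'(2) b(1) by (rule card_Diff1_less)
      then have "card I + card (J - {j}) < card I + card J" by simp
      then obtain w where "flow_ok E I (J - {j}) a' b' w" using IH hall_remove_J[OF h' b] by blast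
      then show ?thesis using remove_J[OF h' b] by blast
    next
      case c
      have c1: "card S < card I" using c hh'(1) by (intro psubset_card_mono) auto
      have fS: "finite S" using hh'(1) c(1) by (rule finite_subset[rotated])
      have "card S > 0" using c fS by auto
      then have c2: "card (I - S) < card I" using c hh'(1) fS c1 by (simp add: card_Diff_subset)
      have c3: "card (Nb E J S) \<le> card J" using hh'(2) Nb_sub[of E J S] by (rule card_mono)
      have c4: "card (J - Nb E J S) \<le> card J" using hh'(2) by (intro card_mono) auto
      obtain w1 where w1: "flow_ok E S (Nb E J S) a' b' w1"
        using IH[OF _ hall_split1[OF h' c(1) c(4)]] c1 c3 by force
      obtain w2 where w2: "flow_ok E (I - S) (J - Nb E J S) a' b' w2"
        using IH[OF _ hall_split2[OF h' c(1) c(4)]] c2 c4 by force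
      show ?thesis using flow_combine[OF h' c(1) w1 w2] by blast
    qed
  qed
  show ?case
  proof (cases "(\<exists>i\<in>I. a i = 0) \<or> (\<exists>j\<in>J. b j = 0) \<or> (\<exists>S. S \<subseteq> I \<and> S \<noteq> {} \<and> S \<noteq> I \<and> sum a S = sum b (Nb E J S))")
    case True
    then show ?thesis using reduce h by blast
  next
    case False
    have apos: "0 < a i" if "i \<in> I" for i
    proof -
      have "a i \<noteq> 0" using False that by blast
      then show ?thesis using hh(3)[OF that] by simp
    qed
    have bpos: "0 < b j" if "j \<in> J" for j
    proof -
      have "b j \<noteq> 0" using False that by blast
      then show ?thesis using hh(4)[OF that] by simp
    qed
    have strict: "sum a S < sum b (Nb E J S)" if "S \<subseteq> I" "S \<noteq> {}" "S \<noteq> I" for S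
    proof -
      have "sum a S \<noteq> sum b (Nb E J S)" using False that by blast
      then show ?thesis using hh(6)[OF that(1)] by simp
    qed
    show ?thesis
    proof (cases "I = {}")
      case True
      then have s0: "sum b J = 0" using hh(5) by simp
      have "J = {}"
      proof (rule ccontr)
        assume "J \<noteq> {}"
        then have "0 < sum b J" using hh(2) bpos by (intro sum_pos) auto
        then show False using s0 by simp
      qed
      then have "flow_ok E I J a b (\<lambda>_ _. 0)" using True unfolding flow_ok_def by simp
      then show ?thesis by blast
    next
      case False
      then obtain i0 where i0: "i0 \<in> I" by blast
      have "a i0 \<le> sum b (Nb E J {i0})" using hh(6)[of "{i0}"] i0 by simp
      then have "Nb E J {i0} \<noteq> {}" using apos[OF i0] by auto
      then obtain j0 where j0: "j0 \<in> J" "E i0 j0" unfolding Nb_def by blast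
      define SS where "SS = {S. S \<subseteq> I \<and> i0 \<notin> S \<and> j0 \<in> Nb E J S}"
      define sl where "sl = (\<lambda>S. sum b (Nb E J S) - sum a S)"
      define t where "t = Min ({a i0, b j0} \<union> sl ` SS)"
      have finSS: "finite SS" using hh(1) unfolding SS_def by (rule finite_subset[rotated, OF finite_Pow_iff[THEN iffD2]]) auto
      have finT: "finite ({a i0, b j0} \<union> sl ` SS)" using finSS by simp
      have tin: "t \<in> {a i0, b j0} \<union> sl ` SS" unfolding t_def using finT by (intro Min_in) auto
      have tle1: "t \<le> a i0" "t \<le> b j0" unfolding t_def using finT by (intro Min_le; simp)+
      have tle2: "t \<le> sl S" if "S \<in> SS" for S unfolding t_def using finT that by (intro Min_le; simp)
      have SSprop: "S \<subseteq> I" "S \<noteq> {}" "S \<noteq> I" if "S \<in> SS" for S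
        using that i0 unfolding SS_def Nb_def by auto
      have slpos: "0 < sl S" if "S \<in> SS" for S using strict[OF SSprop[OF that]] unfolding sl_def by simp
      have tpos: "0 < t" using tin apos[OF i0] bpos[OF j0(1)] slpos by auto
      define a' where "a' = a(i0 := a i0 - t)"
      define b' where "b' = b(j0 := b j0 - t)"
      have h': "hall_ok E I J a' b'" unfolding a'_def b'_def
      proof (rule hall_push[OF h i0 j0(1) j0(2)])
        show "0 \<le> t" "t \<le> a i0" "t \<le> b j0" using tpos tle1 by auto
        show "t \<le> sum b (Nb E J S) - sum a S" if "S \<subseteq> I" "i0 \<notin> S" "j0 \<in> Nb E J S" for S
          using tle2[of S] that unfolding SS_def sl_def by auto
      qed
      have z: "(\<exists>i\<in>I. a' i = 0) \<or> (\<exists>j\<in>J. b' j = 0) \<or> (\<exists>S. S \<subseteq> I \<and> S \<noteq> {} \<and> S \<noteq> I \<and> sum a' S = sum b' (Nb E J S))"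
      proof -
        consider "t = a i0" | "t = b j0" | S where "S \<in> SS" "t = sl S" using tin by blast
        then show ?thesis
        proof cases
          case 1
          then show ?thesis using i0 unfolding a'_def by auto
        next
          case 2
          then show ?thesis using j0 unfolding b'_def by auto
        next
          case 3
          have S: "S \<subseteq> I" "i0 \<notin> S" "j0 \<in> Nb E J S" using 3 unfolding SS_def by auto
          have fS: "finite S" "finite (Nb E J S)" using finite_subset[of S I] finite_subset[of "Nb E J S" J] hh(1,2) S Nb_sub[of E J S] by auto
          have "sum a' S = sum a S" unfolding a'_def using sum_upd[OF fS(1), of a i0 "a i0 - t"] S by simp
          moreover have "sum b' (Nb E J S) = sum b (Nb E J S) - t" unfolding b'_def using sum_upd[OF fS(2), of b j0 "b j0 - t"] S by simp
          ultimately have "sum a' S = sum b' (Nb E J S)" using 3 unfolding sl_def by simp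
          then show ?thesis using SSprop[OF 3(1)] S by blast
        qed
      qed
      obtain w' where w': "flow_ok E I J a' b' w'" using reduce[OF h' z] by blast
      show ?thesis using flow_push[OF w'[unfolded a'_def b'_def] i0 j0(1) j0(2) _ hh(1,2)] tpos by force
    qed
  qed
qed

lemma transport: "hall_ok E I J a b \<Longrightarrow> \<exists>w. flow_ok E I J a b w"
  using transport_aux by blast

definition alg :: "'a set \<Rightarrow> 'a set set \<Rightarrow> bool" where
  "alg X R \<longleftrightarrow> R \<subseteq> Pow X \<and> X \<in> R \<and> (\<forall>S\<in>R. X - S \<in> R) \<and> (\<forall>S\<in>R. \<forall>T\<in>R. S \<inter> T \<in> R)"

definition fa :: "'a set set \<Rightarrow> 'a set \<Rightarrow> ('a set \<Rightarrow> real) \<Rightarrow> bool" where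
  "fa Alg X \<mu> \<longleftrightarrow> \<mu> X = 1 \<and> (\<forall>S\<in>Alg. 0 \<le> \<mu> S) \<and>
     (\<forall>S\<in>Alg. \<forall>T\<in>Alg. S \<inter> T = {} \<longrightarrow> \<mu> (S \<union> T) = \<mu> S + \<mu> T)"

lemma algD:
  assumes "alg X R"
  shows "\<And>S. S \<in> R \<Longrightarrow> S \<subseteq> X" "X \<in> R" "\<And>S. S \<in> R \<Longrightarrow> X - S \<in> R"
    "\<And>S T. S \<in> R \<Longrightarrow> T \<in> R \<Longrightarrow> S \<inter> T \<in> R"
  using assms unfolding alg_def by auto

lemma alg_empty:
  assumes "alg X R" shows "{} \<in> R"
proof -
  have "X - X \<in> R" using algD(2,3)[OF assms] by blast
  then show ?thesis by simp
qed

lemma alg_Un: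
  assumes "alg X R" "S \<in> R" "T \<in> R"
  shows "S \<union> T \<in> R"
proof -
  have "S \<union> T = X - ((X - S) \<inter> (X - T))" using algD(1)[OF assms(1)] assms(2,3) by blast
  then show ?thesis using algD(3,4)[OF assms(1)] assms(2,3) by metis
qed

lemma alg_Diff:
  assumes "alg X R" "S \<in> R" "T \<in> R"
  shows "S - T \<in> R"
proof -
  have "S - T = S \<inter> (X - T)" using algD(1)[OF assms(1)] assms(2,3) by blast
  then show ?thesis using algD(3,4)[OF assms(1)] assms(2,3) by metis
qed

lemma alg_Inter_fin:
  assumes "alg X R" "finite F" "F \<subseteq> R"
  shows "X \<inter> \<Inter>F \<in> R"
  using assms(2,3)
proof (induction F rule: finite_induct)
  case empty
  then show ?case using algD(2)[OF assms(1)] by simp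
next
  case (insert x F)
  have "X \<inter> \<Inter>(insert x F) = x \<inter> (X \<inter> \<Inter>F)" by blast
  then show ?case using insert algD(4)[OF assms(1)] by simp
qed

lemma alg_UN_fin:
  assumes "alg X R" "finite I" "\<And>i. i \<in> I \<Longrightarrow> A i \<in> R"
  shows "(\<Union>i\<in>I. A i) \<in> R"
  using assms(2,3)
proof (induction I rule: finite_induct)
  case empty
  then show ?case using alg_empty[OF assms(1)] by simp
next
  case (insert x F)
  then show ?case using alg_Un[OF assms(1)] by simp
qed

context
  fixes X R m
  assumes A: "alg X R" and M: "fa R X m"
begin

lemma fa_empty: "m {} = 0"
proof -
  have "m ({} \<union> {}) = m {} + m {}" using M alg_empty[OF A] unfolding fa_def by blast
  then show ?thesis by simp
qed

lemma fa_nonneg: "S \<in> R \<Longrightarrow> 0 \<le> m S" using M unfolding fa_def by blast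

lemma fa_add: "S \<in> R \<Longrightarrow> T \<in> R \<Longrightarrow> S \<inter> T = {} \<Longrightarrow> m (S \<union> T) = m S + m T"
  using M unfolding fa_def by blast

lemma fa_mono:
  assumes "S \<in> R" "T \<in> R" "S \<subseteq> T"
  shows "m S \<le> m T"
proof -
  have "T = S \<union> (T - S)" using assms by blast
  then have "m T = m S + m (T - S)" using fa_add[OF assms(1) alg_Diff[OF A assms(2,1)]] by force
  then show ?thesis using fa_nonneg[OF alg_Diff[OF A assms(2,1)]] by simp
qed

lemma fa_UN:
  assumes "finite I" "\<And>i. i \<in> I \<Longrightarrow> B i \<in> R"
    "\<And>i j. i \<in> I \<Longrightarrow> j \<in> I \<Longrightarrow> i \<noteq> j \<Longrightarrow> B i \<inter> B j = {}"
  shows "m (\<Union>i\<in>I. B i) = (\<Sum>i\<in>I. m (B i))"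
  using assms
proof (induction I rule: finite_induct)
  case empty
  then show ?case using fa_empty by simp
next
  case (insert x F)
  have d: "B x \<inter> (\<Union>i\<in>F. B i) = {}" using insert.prems(2) insert.hyps(2) by fastforce
  have "m (\<Union>i\<in>insert x F. B i) = m (B x \<union> (\<Union>i\<in>F. B i))" by simp
  also have "\<dots> = m (B x) + m (\<Union>i\<in>F. B i)"
    using fa_add[OF _ alg_UN_fin[OF A insert.hyps(1)] d] insert.prems(1) by simp
  also have "m (\<Union>i\<in>F. B i) = (\<Sum>i\<in>F. m (B i))" using insert by auto
  finally show ?case using insert.hyps by simp
qed

end

definition pat :: "'a set set \<Rightarrow> 'a \<Rightarrow> 'a set set" where
  "pat F x = {p\<in>F. x \<in> p}"

definition atom :: "'a set \<Rightarrow> 'a set set \<Rightarrow> 'a set set \<Rightarrow> 'a set" where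
  "atom X F s = {x\<in>X. pat F x = s}"

lemma atom_in:
  assumes "alg X R" "finite F" "F \<subseteq> R" "s \<subseteq> F"
  shows "atom X F s \<in> R"
proof -
  have "atom X F s = X \<inter> \<Inter>(s \<union> (\<lambda>p. X - p) ` (F - s))"
    using assms(4) unfolding atom_def pat_def by auto
  moreover have "s \<union> (\<lambda>p. X - p) ` (F - s) \<subseteq> R" using assms algD(3)[OF assms(1)] by auto
  moreover have "finite (s \<union> (\<lambda>p. X - p) ` (F - s))" using assms(2,4) finite_subset by auto
  ultimately show ?thesis using alg_Inter_fin[OF assms(1)] by metis
qed

lemma atoms_disj: "s \<noteq> t \<Longrightarrow> atom X F s \<inter> atom X F t = {}"
  unfolding atom_def by auto

lemma pats_finite: "finite F \<Longrightarrow> finite (pat F ` X)"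
  by (rule finite_subset[of _ "Pow F"]) (auto simp: pat_def)

lemma pat_sub: "pat F x \<subseteq> F" unfolding pat_def by auto

lemma atom_cover:
  assumes "p \<in> F" "p \<subseteq> X"
  shows "p = (\<Union>s\<in>{s \<in> pat F ` X. p \<in> s}. atom X F s)"
  using assms unfolding atom_def pat_def by auto

lemma atom_cover_X: "X = (\<Union>s\<in>pat F ` X. atom X F s)"
  unfolding atom_def by auto

lemma fa_atoms_sum:
  assumes A: "alg X R" and M: "fa R X m" and F: "finite F" "F \<subseteq> R" and p: "p \<in> F"
  shows "m p = (\<Sum>s\<in>pat F ` X. if p \<in> s then m (atom X F s) else 0)"
proof -
  have "p \<subseteq> X" using algD(1)[OF A] F p by blast
  then have "m p = m (\<Union>s\<in>{s \<in> pat F ` X. p \<in> s}. atom X F s)" using atom_cover[OF p] by metis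
  also have "\<dots> = (\<Sum>s\<in>{s \<in> pat F ` X. p \<in> s}. m (atom X F s))"
  proof (rule fa_UN[OF A M])
    show "finite {s \<in> pat F ` X. p \<in> s}" using pats_finite[OF F(1)] by simp
    show "atom X F s \<in> R" if "s \<in> {s \<in> pat F ` X. p \<in> s}" for s
      using that atom_in[OF A F pat_sub] by blast
    show "atom X F s \<inter> atom X F t = {}" if "s \<noteq> t" for s t using atoms_disj[OF that] .
  qed
  also have "\<dots> = (\<Sum>s\<in>pat F ` X. if p \<in> s then m (atom X F s) else 0)"
    using pats_finite[OF F(1)] by (simp add: sum.If_cases Int_def)
  finally show ?thesis .
qed

lemma fa_atoms_total:
  assumes A: "alg X R" and M: "fa R X m" and F: "finite F" "F \<subseteq> R"
  shows "(\<Sum>s\<in>pat F ` X. m (atom X F s)) = 1"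
proof -
  have "m X = m (\<Union>s\<in>pat F ` X. atom X F s)" using atom_cover_X by metis
  also have "\<dots> = (\<Sum>s\<in>pat F ` X. m (atom X F s))"
  proof (rule fa_UN[OF A M])
    show "finite (pat F ` X)" using pats_finite[OF F(1)] by simp
    show "atom X F s \<in> R" if "s \<in> pat F ` X" for s
      using that atom_in[OF A F pat_sub] by blast
    show "atom X F s \<inter> atom X F t = {}" if "s \<noteq> t" for s t using atoms_disj[OF that] .
  qed
  finally show ?thesis using M unfolding fa_def by simp
qed

definition dm :: "'k set \<Rightarrow> ('k \<Rightarrow> 'a) \<Rightarrow> ('k \<Rightarrow> real) \<Rightarrow> 'a set \<Rightarrow> real" where
  "dm K z c T = (\<Sum>k\<in>K. if z k \<in> T then c k else 0)"


lemma finite_amalg: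
  fixes X :: "'a set"
  assumes AP: "alg X P" and AQ: "alg X Q" and MP: "fa P X lam" and MQ: "fa Q X kap"
    and cons: "\<And>p q. p \<in> P \<Longrightarrow> q \<in> Q \<Longrightarrow> p \<subseteq> q \<Longrightarrow> lam p \<le> kap q"
    and P0: "finite P0" "P0 \<subseteq> P" and Q0: "finite Q0" "Q0 \<subseteq> Q"
  shows "\<exists>K z c. finite (K :: ('a set set \<times> 'a set set) set) \<and> (\<forall>k\<in>K. 0 \<le> c k) \<and> sum c K = 1 \<and>
     (\<forall>p\<in>P0. dm K z c p = lam p) \<and> (\<forall>q\<in>Q0. dm K z c q = kap q)"
proof -
  define I where "I = pat P0 ` X"
  define J where "J = pat Q0 ` X"
  define a where "a = (\<lambda>s. lam (atom X P0 s))"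
  define b where "b = (\<lambda>t. kap (atom X Q0 t))"
  define E where "E = (\<lambda>s t. \<exists>x\<in>X. pat P0 x = s \<and> pat Q0 x = t)"
  have fI: "finite I" "finite J" using pats_finite P0(1) Q0(1) unfolding I_def J_def by auto
  have aI: "atom X P0 s \<in> P" if "s \<in> I" for s using atom_in[OF AP P0 pat_sub] that unfolding I_def by auto
  have bJ: "atom X Q0 t \<in> Q" if "t \<in> J" for t using atom_in[OF AQ Q0 pat_sub] that unfolding J_def by auto
  have hall: "hall_ok E I J a b"
  proof (rule hall_okI)
    show "finite I" "finite J" by (rule fI)+
    show "0 \<le> a s" if "s \<in> I" for s unfolding a_def by (rule fa_nonneg[OF AP MP aI[OF that]])
    show "0 \<le> b t" if "t \<in> J" for t unfolding b_def by (rule fa_nonneg[OF AQ MQ bJ[OF that]])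
    show "sum a I = sum b J" unfolding a_def b_def I_def J_def
      using fa_atoms_total[OF AP MP P0] fa_atoms_total[OF AQ MQ Q0] by simp
    show "sum a S \<le> sum b (Nb E J S)" if S: "S \<subseteq> I" for S
    proof -
      define U where "U = (\<Union>s\<in>S. atom X P0 s)"
      define V where "V = (\<Union>t\<in>Nb E J S. atom X Q0 t)"
      have fS: "finite S" "finite (Nb E J S)" using finite_subset[OF S fI(1)] finite_subset[OF Nb_sub fI(2)] by auto
      have e1: "lam U = sum a S" unfolding U_def a_def
      proof (rule fa_UN[OF AP MP fS(1)])
        show "atom X P0 s \<in> P" if "s \<in> S" for s using aI S that by blast
        show "atom X P0 s \<inter> atom X P0 t = {}" if "s \<noteq> t" for s t using atoms_disj[OF that] .
      qed
      have e2: "kap V = sum b (Nb E J S)" unfolding V_def b_def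
      proof (rule fa_UN[OF AQ MQ fS(2)])
        show "atom X Q0 s \<in> Q" if "s \<in> Nb E J S" for s using bJ Nb_sub[of E J S] that by blast
        show "atom X Q0 s \<inter> atom X Q0 t = {}" if "s \<noteq> t" for s t using atoms_disj[OF that] .
      qed
      have UP: "U \<in> P" unfolding U_def using alg_UN_fin[OF AP fS(1)] aI S by blast
      have VQ: "V \<in> Q" unfolding V_def using alg_UN_fin[OF AQ fS(2)] bJ Nb_sub[of E J S] by blast
      have UV: "U \<subseteq> V"
      proof
        fix x assume "x \<in> U"
        then obtain s where s: "s \<in> S" "x \<in> atom X P0 s" unfolding U_def by blast
        then have x: "x \<in> X" "pat P0 x = s" unfolding atom_def by auto
        have "pat Q0 x \<in> Nb E J S" unfolding Nb_def J_def E_def using x s by blast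
        moreover have "x \<in> atom X Q0 (pat Q0 x)" unfolding atom_def using x by simp
        ultimately show "x \<in> V" unfolding V_def by blast
      qed
      show ?thesis using cons[OF UP VQ UV] e1 e2 by simp
    qed
  qed
  obtain w where w: "flow_ok E I J a b w" using transport[OF hall] by blast
  define z where "z = (\<lambda>(s,t). SOME x. x \<in> X \<and> pat P0 x = s \<and> pat Q0 x = t)"
  have zprop: "z (s,t) \<in> X \<and> pat P0 (z (s,t)) = s \<and> pat Q0 (z (s,t)) = t" if "w s t \<noteq> 0" for s t
  proof -
    have "E s t" using w that unfolding flow_ok_def by blast
    then have "\<exists>x. x \<in> X \<and> pat P0 x = s \<and> pat Q0 x = t" unfolding E_def by blast
    from someI_ex[OF this] show ?thesis unfolding z_def by simp
  qed
  define c where "c = (\<lambda>(s,t). w s t)"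
  define K where "K = I \<times> J"
  have wnn: "0 \<le> w s t" for s t using w unfolding flow_ok_def by blast
  have rows: "sum (w s) J = a s" if "s \<in> I" for s using w that unfolding flow_ok_def by blast
  have cols: "(\<Sum>s\<in>I. w s t) = b t" if "t \<in> J" for t using w that unfolding flow_ok_def by blast
  have "sum c K = (\<Sum>s\<in>I. \<Sum>t\<in>J. w s t)" unfolding K_def c_def by (simp add: sum.cartesian_product)
  also have "\<dots> = sum a I" using rows by simp
  also have "\<dots> = 1" unfolding a_def I_def using fa_atoms_total[OF AP MP P0] by simp
  finally have c1: "sum c K = 1" .
  have dP: "dm K z c p = lam p" if p: "p \<in> P0" for p
  proof -
    have "dm K z c p = (\<Sum>(s,t)\<in>I \<times> J. if p \<in> s then w s t else 0)"
      unfolding dm_def K_def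
    proof (rule sum.cong[OF refl])
      fix k assume "k \<in> I \<times> J"
      obtain s t where k: "k = (s,t)" by fastforce
      show "(if z k \<in> p then c k else 0) = (case k of (s, t) \<Rightarrow> if p \<in> s then w s t else 0)"
      proof (cases "w s t = 0")
        case True
        then show ?thesis unfolding k c_def by simp
      next
        case False
        have "z k \<in> p \<longleftrightarrow> p \<in> s" using zprop[OF False] p unfolding k pat_def by auto
        then show ?thesis unfolding k c_def by simp
      qed
    qed
    also have "\<dots> = (\<Sum>s\<in>I. \<Sum>t\<in>J. if p \<in> s then w s t else 0)" by (simp add: sum.cartesian_product)
    also have "\<dots> = (\<Sum>s\<in>I. if p \<in> s then a s else 0)"
      by (intro sum.cong refl) (simp add: rows)
    also have "\<dots> = lam p" unfolding a_def I_def using fa_atoms_sum[OF AP MP P0 p] by simp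
    finally show ?thesis .
  qed
  have dQ: "dm K z c q = kap q" if q: "q \<in> Q0" for q
  proof -
    have "dm K z c q = (\<Sum>(s,t)\<in>I \<times> J. if q \<in> t then w s t else 0)"
      unfolding dm_def K_def
    proof (rule sum.cong[OF refl])
      fix k assume "k \<in> I \<times> J"
      obtain s t where k: "k = (s,t)" by fastforce
      show "(if z k \<in> q then c k else 0) = (case k of (s, t) \<Rightarrow> if q \<in> t then w s t else 0)"
      proof (cases "w s t = 0")
        case True
        then show ?thesis unfolding k c_def by simp
      next
        case False
        have "z k \<in> q \<longleftrightarrow> q \<in> t" using zprop[OF False] q unfolding k pat_def by auto
        then show ?thesis unfolding k c_def by simp
      qed
    qed
    also have "\<dots> = (\<Sum>s\<in>I. \<Sum>t\<in>J. if q \<in> t then w s t else 0)" by (simp add: sum.cartesian_product)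
    also have "\<dots> = (\<Sum>t\<in>J. \<Sum>s\<in>I. if q \<in> t then w s t else 0)" by (rule sum.swap)
    also have "\<dots> = (\<Sum>t\<in>J. if q \<in> t then b t else 0)"
      by (intro sum.cong refl) (simp add: cols)
    also have "\<dots> = kap q" unfolding b_def J_def using fa_atoms_sum[OF AQ MQ Q0 q] by simp
    finally show ?thesis .
  qed
  have fK: "finite K" unfolding K_def using fI by simp
  have cK: "\<forall>k\<in>K. 0 \<le> c k" unfolding c_def using wnn by (simp add: case_prod_beta)
  show ?thesis
    apply (rule exI[of _ K])
    apply (rule exI[of _ z])
    apply (rule exI[of _ c])
    using fK cK c1 dP dQ by blast
qed

lemma dm_nonneg: "(\<forall>k\<in>K. 0 \<le> c k) \<Longrightarrow> 0 \<le> dm K z c T"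
  unfolding dm_def by (intro sum_nonneg) auto

lemma dm_le1:
  assumes "\<forall>k\<in>K. 0 \<le> c k" "sum c K = 1" shows "dm K z c T \<le> 1"
proof -
  have "dm K z c T \<le> sum c K" unfolding dm_def by (intro sum_mono) (use assms in auto)
  then show ?thesis using assms by simp
qed

lemma dm_add: "S \<inter> T = {} \<Longrightarrow> dm K z c (S \<union> T) = dm K z c S + dm K z c T"
  unfolding dm_def sum.distrib[symmetric] by (intro sum.cong refl) auto

theorem amalg:
  fixes X :: "'a set"
  assumes AR: "alg X R" and AP: "alg X P" and AQ: "alg X Q" and PR: "P \<subseteq> R" and QR: "Q \<subseteq> R"
    and MP: "fa P X lam" and MQ: "fa Q X kap"
    and cons: "\<And>p q. p \<in> P \<Longrightarrow> q \<in> Q \<Longrightarrow> p \<subseteq> q \<Longrightarrow> lam p \<le> kap q"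
  shows "\<exists>\<omega>. fa R X \<omega> \<and> (\<forall>p\<in>P. \<omega> p = lam p) \<and> (\<forall>q\<in>Q. \<omega> q = kap q)"
proof -
  define Top where "Top = product_topology (\<lambda>_. top_of_set {0..1::real}) R"
  have tsp: "topspace Top = (\<Pi>\<^sub>E S\<in>R. {0..1})" unfolding Top_def by simp
  have comp: "compact_space Top" unfolding Top_def compact_space_product_topology
    by (intro disjI2 ballI compact_space_subtopology) simp
  have proj: "continuous_map Top euclideanreal (\<lambda>f. f S)" if "S \<in> R" for S
  proof -
    have "continuous_map Top (top_of_set {0..1}) (\<lambda>f. f S)"
      unfolding Top_def by (rule continuous_map_product_projection[OF that])
    then show ?thesis by (simp add: continuous_map_in_subtopology)
  qed
  define cf where "cf = (\<lambda>i (f::'a set \<Rightarrow> real). case i of Inl st \<Rightarrow> f (fst st \<union> snd st) - f (fst st) - f (snd st)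
      | Inr (Inl p) \<Rightarrow> f p - lam p | Inr (Inr q) \<Rightarrow> f q - kap q)"
  define Ix where "Ix = {i. case i of Inl st \<Rightarrow> fst st \<in> R \<and> snd st \<in> R \<and> fst st \<inter> snd st = {}
      | Inr (Inl p) \<Rightarrow> p \<in> P | Inr (Inr q) \<Rightarrow> q \<in> Q}"
  define C where "C = (\<lambda>i. {f \<in> topspace Top. cf i f \<in> {0}})"
  have cont: "continuous_map Top euclideanreal (cf i)" if "i \<in> Ix" for i
  proof (cases i)
    case (Inl st)
    then have st: "fst st \<in> R" "snd st \<in> R" using that unfolding Ix_def by auto
    then have "fst st \<union> snd st \<in> R" using alg_Un[OF AR] by blast
    then show ?thesis unfolding cf_def Inl using proj st by (simp add: continuous_map_diff)
  next
    case (Inr r)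
    then show ?thesis
    proof (cases r)
      case (Inl p)
      then have "p \<in> R" using that PR Inr unfolding Ix_def by auto
      then show ?thesis unfolding cf_def Inr Inl using proj by (simp add: continuous_map_diff)
    next
      case (Inr q)
      then have "q \<in> R" using that QR \<open>i = Inr r\<close> unfolding Ix_def by auto
      then show ?thesis unfolding cf_def \<open>i = Inr r\<close> Inr using proj by (simp add: continuous_map_diff)
    qed
  qed
  have clo: "closedin Top (C i)" if "i \<in> Ix" for i
    unfolding C_def by (rule closedin_continuous_map_preimage[OF cont[OF that]]) simp
  have fip: "\<Inter>\<F> \<noteq> {}" if F: "finite \<F>" "\<F> \<subseteq> C ` Ix" for \<F>
  proof -
    obtain Ix0 where Ix0: "Ix0 \<subseteq> Ix" "finite Ix0" "\<F> = C ` Ix0"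
      using finite_subset_image[OF F(1) F(2)] by blast
    define P0 where "P0 = (\<lambda>p. Inr (Inl p)) -` Ix0"
    define Q0 where "Q0 = (\<lambda>q. Inr (Inr q)) -` Ix0"
    have fP0: "finite P0" unfolding P0_def using Ix0(2) by (rule finite_vimageI) (simp add: inj_def)
    have fQ0: "finite Q0" unfolding Q0_def using Ix0(2) by (rule finite_vimageI) (simp add: inj_def)
    have P0P: "P0 \<subseteq> P" using Ix0(1) unfolding P0_def Ix_def by auto
    have Q0Q: "Q0 \<subseteq> Q" using Ix0(1) unfolding Q0_def Ix_def by auto
    obtain K z c where Kzc: "finite (K :: ('a set set \<times> 'a set set) set)" "\<forall>k\<in>K. 0 \<le> c k" "sum c K = 1"
      "\<forall>p\<in>P0. dm K z c p = lam p" "\<forall>q\<in>Q0. dm K z c q = kap q"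
      using finite_amalg[OF AP AQ MP MQ cons fP0 P0P fQ0 Q0Q] by blast
    define f where "f = restrict (dm K z c) R"
    have ft: "f \<in> topspace Top" unfolding tsp f_def
      using dm_nonneg[OF Kzc(2)] dm_le1[OF Kzc(2-3)] by auto
    have "f \<in> C i" if i: "i \<in> Ix0" for i
    proof -
      have "cf i f = 0"
      proof (cases i)
        case (Inl st)
        have "i \<in> Ix" using i Ix0(1) by blast
        then have st: "fst st \<in> R" "snd st \<in> R" "fst st \<inter> snd st = {}" using Inl unfolding Ix_def by auto
        then have "fst st \<union> snd st \<in> R" using alg_Un[OF AR] by blast
        then show ?thesis unfolding cf_def Inl f_def using st dm_add[OF st(3), of K z c] by simp
      next
        case (Inr r)
        then show ?thesis
        proof (cases r)
          case (Inl p)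
          then have "p \<in> P0" using i \<open>i = Inr r\<close> unfolding P0_def by simp
          then have "p \<in> R" "dm K z c p = lam p" using P0P PR Kzc(4) by auto
          then show ?thesis unfolding cf_def \<open>i = Inr r\<close> Inl f_def by simp
        next
          case (Inr q)
          then have "q \<in> Q0" using i \<open>i = Inr r\<close> unfolding Q0_def by simp
          then have "q \<in> R" "dm K z c q = kap q" using Q0Q QR Kzc(5) by auto
          then show ?thesis unfolding cf_def \<open>i = Inr r\<close> Inr f_def by simp
        qed
      qed
      then show ?thesis unfolding C_def using ft by simp
    qed
    then have "f \<in> \<Inter>\<F>" using Ix0(3) by blast
    then show ?thesis by blast
  qed
  have "\<Inter>(C ` Ix) \<noteq> {}"
    using comp unfolding compact_space_fip using clo fip by blast
  then obtain f where f: "f \<in> \<Inter>(C ` Ix)" by blast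
  have XI: "Inr (Inl X) \<in> Ix" unfolding Ix_def using algD(2)[OF AP] by simp
  then have ft: "f \<in> topspace Top" using f unfolding C_def by blast
  have cf0: "cf i f = 0" if "i \<in> Ix" for i using f that unfolding C_def by blast
  have fP: "f p = lam p" if "p \<in> P" for p
    using cf0[of "Inr (Inl p)"] that unfolding Ix_def cf_def by simp
  have fQ: "f q = kap q" if "q \<in> Q" for q
    using cf0[of "Inr (Inr q)"] that unfolding Ix_def cf_def by simp
  have "fa R X f" unfolding fa_def
  proof (intro conjI ballI impI)
    show "f X = 1" using fP[OF algD(2)[OF AP]] MP unfolding fa_def by simp
    show "0 \<le> f S" if "S \<in> R" for S using ft that unfolding tsp by auto
    show "f (S \<union> T) = f S + f T" if "S \<in> R" "T \<in> R" "S \<inter> T = {}" for S T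
      using cf0[of "Inl (S,T)"] that unfolding Ix_def cf_def by simp
  qed
  then show ?thesis using fP fQ by blast
qed

fun trn :: "(nat \<Rightarrow> nat) \<Rightarrow> 'f trm \<Rightarrow> 'f trm" where
  "trn \<pi> (Var i) = Var (\<pi> i)"
| "trn \<pi> (Fn f ts) = Fn f (map (trn \<pi>) ts)"

fun frn :: "(nat \<Rightarrow> nat) \<Rightarrow> ('f, 'r) fm \<Rightarrow> ('f, 'r) fm" where
  "frn \<pi> FF = FF"
| "frn \<pi> (Eq s t) = Eq (trn \<pi> s) (trn \<pi> t)"
| "frn \<pi> (Rel r ts) = Rel r (map (trn \<pi>) ts)"
| "frn \<pi> (Neg \<phi>) = Neg (frn \<pi> \<phi>)"
| "frn \<pi> (Conj \<phi> \<psi>) = Conj (frn \<pi> \<phi>) (frn \<pi> \<psi>)"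
| "frn \<pi> (Ex v \<phi>) = Ex (\<pi> v) (frn \<pi> \<phi>)"

lemma teval_trn: "teval M e (trn \<pi> t) = teval M (e \<circ> \<pi>) t"
  by (induction t) (simp_all cong: map_cong)

lemma tvars_trn: "tvars (trn \<pi> t) = \<pi> ` tvars t"
  by (induction t) auto

lemma sat_frn: "inj \<pi> \<Longrightarrow> sat M e (frn \<pi> \<phi>) = sat M (e \<circ> \<pi>) \<phi>"
proof (induction \<phi> arbitrary: e)
  case (Ex v \<phi>)
  have eq: "(e(\<pi> v := a)) \<circ> \<pi> = (e \<circ> \<pi>)(v := a)" for a
    using Ex.prems by (auto simp: inj_def)
  have "sat M (e(\<pi> v := a)) (frn \<pi> \<phi>) \<longleftrightarrow> sat M ((e \<circ> \<pi>)(v := a)) \<phi>" for a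
    by (subst Ex.IH[OF Ex.prems]) (simp only: eq)
  then show ?case by (simp only: frn.simps sat.simps)
qed (simp_all add: teval_trn comp_def cong: map_cong)

lemma fvars_frn: "inj \<pi> \<Longrightarrow> fvars (frn \<pi> \<phi>) = \<pi> ` fvars \<phi>"
proof (induction \<phi>)
  case (Ex v \<phi>)
  then show ?case by (simp add: image_set_diff)
qed (auto simp: tvars_trn)

lemma sat_exs: "sat M e (foldr Ex vs \<phi>) \<longleftrightarrow> (\<exists>g. (\<forall>i. i \<notin> set vs \<longrightarrow> g i = e i) \<and> sat M g \<phi>)"
proof (induction vs arbitrary: e)
  case Nil
  then show ?case by (auto intro: exI[of _ e])
next
  case (Cons v vs)
  show ?case
  proof
    assume "sat M e (foldr Ex (v # vs) \<phi>)"
    then obtain a where "sat M (e(v := a)) (foldr Ex vs \<phi>)" by auto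
    then obtain g where g: "\<forall>i. i \<notin> set vs \<longrightarrow> g i = (e(v := a)) i" "sat M g \<phi>" using Cons.IH by blast
    have "\<forall>i. i \<notin> set (v # vs) \<longrightarrow> g i = e i" using g(1) by auto
    then show "\<exists>g. (\<forall>i. i \<notin> set (v # vs) \<longrightarrow> g i = e i) \<and> sat M g \<phi>" using g(2) by blast
  next
    assume "\<exists>g. (\<forall>i. i \<notin> set (v # vs) \<longrightarrow> g i = e i) \<and> sat M g \<phi>"
    then obtain g where g: "\<forall>i. i \<notin> set (v # vs) \<longrightarrow> g i = e i" "sat M g \<phi>" by blast
    have "\<forall>i. i \<notin> set vs \<longrightarrow> g i = (e(v := g v)) i" using g(1) by auto
    then have "sat M (e(v := g v)) (foldr Ex vs \<phi>)" using Cons.IH g(2) by blast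
    then show "sat M e (foldr Ex (v # vs) \<phi>)" by auto
  qed
qed

lemma fvars_exs: "fvars (foldr Ex vs \<phi>) = fvars \<phi> - set vs"
  by (induction vs) auto

lemma tuples_len: "a \<in> tuples k \<longleftrightarrow> length a = k" unfolding tuples_def by simp

lemma env_lt: "i < n \<Longrightarrow> env n a e i = a ! i" unfolding env_def by simp
lemma env_ge: "\<not> i < n \<Longrightarrow> env n a e i = e i" unfolding env_def by simp

lemma defin_mono: "C \<subseteq> D \<Longrightarrow> defin M k C \<subseteq> defin M k D"
  unfolding defin_def by blast

lemma definE:
  assumes "S \<in> defin M k C"
  obtains \<phi> e where "\<forall>i\<in>fvars \<phi>. k \<le> i \<longrightarrow> e i \<in> C" "S = {a \<in> tuples k. sat M (env k a e) \<phi>}"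
  using assms unfolding defin_def by blast

lemma definI:
  "\<forall>i\<in>fvars \<phi>. k \<le> i \<longrightarrow> e i \<in> C \<Longrightarrow> S = {a \<in> tuples k. sat M (env k a e) \<phi>} \<Longrightarrow> S \<in> defin M k C"
  unfolding defin_def by blast

lemma defin_top: "tuples k \<in> defin M k C"
  by (rule definI[of "Neg FF"]) auto

lemma defin_compl:
  assumes "S \<in> defin M k C" shows "tuples k - S \<in> defin M k C"
proof -
  obtain \<phi> e where "\<forall>i\<in>fvars \<phi>. k \<le> i \<longrightarrow> e i \<in> C" "S = {a \<in> tuples k. sat M (env k a e) \<phi>}"
    using assms by (rule definE)
  then show ?thesis by (intro definI[of "Neg \<phi>" k e]) auto
qed

lemma defin_Int:
  assumes S: "S \<in> defin M k C" and T: "T \<in> defin M k C"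
  shows "S \<inter> T \<in> defin M k C"
proof -
  obtain \<phi>1 e1 where 1: "\<forall>i\<in>fvars \<phi>1. k \<le> i \<longrightarrow> e1 i \<in> C" "S = {a \<in> tuples k. sat M (env k a e1) \<phi>1}"
    using S by (rule definE)
  obtain \<phi>2 e2 where 2: "\<forall>i\<in>fvars \<phi>2. k \<le> i \<longrightarrow> e2 i \<in> C" "T = {a \<in> tuples k. sat M (env k a e2) \<phi>2}"
    using T by (rule definE)
  define \<pi>1 where "\<pi>1 = (\<lambda>i::nat. if i < k then i else k + 2 * (i - k))"
  define \<pi>2 where "\<pi>2 = (\<lambda>i::nat. if i < k then i else k + 2 * (i - k) + 1)"
  define e where "e = (\<lambda>i. if even (i - k) then e1 (k + (i - k) div 2) else e2 (k + (i - k) div 2))"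
  have inj1: "inj \<pi>1" unfolding \<pi>1_def inj_def by auto
  have inj2: "inj \<pi>2" unfolding \<pi>2_def inj_def by auto
  have ee1: "e (\<pi>1 j) = e1 j" if "k \<le> j" for j using that unfolding e_def \<pi>1_def by auto
  have ee2: "e (\<pi>2 j) = e2 j" if "k \<le> j" for j using that unfolding e_def \<pi>2_def by auto
  have env1: "env k a e \<circ> \<pi>1 = env k a e1" for a
  proof
    fix j show "(env k a e \<circ> \<pi>1) j = env k a e1 j"
      using ee1[of j] unfolding env_def \<pi>1_def by auto
  qed
  have env2: "env k a e \<circ> \<pi>2 = env k a e2" for a
  proof
    fix j show "(env k a e \<circ> \<pi>2) j = env k a e2 j"
      using ee2[of j] unfolding env_def \<pi>2_def by auto
  qed
  show ?thesis
  proof (rule definI[of "Conj (frn \<pi>1 \<phi>1) (frn \<pi>2 \<phi>2)" k e])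
    show "\<forall>i\<in>fvars (Conj (frn \<pi>1 \<phi>1) (frn \<pi>2 \<phi>2)). k \<le> i \<longrightarrow> e i \<in> C"
    proof (intro ballI impI)
      fix i assume i: "i \<in> fvars (Conj (frn \<pi>1 \<phi>1) (frn \<pi>2 \<phi>2))" "k \<le> i"
      then consider j where "j \<in> fvars \<phi>1" "i = \<pi>1 j" | j where "j \<in> fvars \<phi>2" "i = \<pi>2 j"
        by (auto simp: fvars_frn[OF inj1] fvars_frn[OF inj2])
      then show "e i \<in> C"
      proof cases
        case 1
        then have "k \<le> j" using i(2) unfolding \<pi>1_def by (auto split: if_splits)
        then show ?thesis using 1 ee1 \<open>\<forall>i\<in>fvars \<phi>1. k \<le> i \<longrightarrow> e1 i \<in> C\<close> by auto
      next
        case 2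
        then have "k \<le> j" using i(2) unfolding \<pi>2_def by (auto split: if_splits)
        then show ?thesis using 2 ee2 \<open>\<forall>i\<in>fvars \<phi>2. k \<le> i \<longrightarrow> e2 i \<in> C\<close> by auto
      qed
    qed
    show "S \<inter> T = {a \<in> tuples k. sat M (env k a e) (Conj (frn \<pi>1 \<phi>1) (frn \<pi>2 \<phi>2))}"
      using 1(2) 2(2) by (auto simp: sat_frn[OF inj1] sat_frn[OF inj2] env1 env2)
  qed
qed

lemma defin_sub: "defin M k C \<subseteq> Pow (tuples k)"
  unfolding defin_def by auto

lemma defin_alg: "alg (tuples k) (defin M k C)"
  unfolding alg_def
proof (intro conjI ballI)
  show "defin M k C \<subseteq> Pow (tuples k)" by (rule defin_sub)
  show "tuples k \<in> defin M k C" by (rule defin_top)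
  show "tuples k - S \<in> defin M k C" if "S \<in> defin M k C" for S using that by (rule defin_compl)
  show "S \<inter> T \<in> defin M k C" if "S \<in> defin M k C" "T \<in> defin M k C" for S T using that by (rule defin_Int)
qed

definition cyl :: "nat \<Rightarrow> nat \<Rightarrow> 'u list set \<Rightarrow> 'u list set" where
  "cyl n m S = {a \<in> tuples (n + m). take n a \<in> S}"

lemma defin_cyl:
  assumes S: "S \<in> defin M n C"
  shows "cyl n m S \<in> defin M (n + m) C"
proof -
  obtain \<phi> e where 1: "\<forall>i\<in>fvars \<phi>. n \<le> i \<longrightarrow> e i \<in> C" "S = {a \<in> tuples n. sat M (env n a e) \<phi>}"
    using S by (rule definE)
  define \<pi> where "\<pi> = (\<lambda>i::nat. if i < n then i else i + m)"
  define e' where "e' = (\<lambda>i. e (i - m))"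
  have inj: "inj \<pi>" unfolding \<pi>_def inj_def by auto
  have envc: "env (n + m) b e' \<circ> \<pi> = env n (take n b) e" if "length b = n + m" for b
  proof
    fix j show "(env (n + m) b e' \<circ> \<pi>) j = env n (take n b) e j"
      using that unfolding env_def \<pi>_def e'_def by auto
  qed
  show ?thesis
  proof (rule definI[of "frn \<pi> \<phi>" "n + m" e'])
    show "\<forall>i\<in>fvars (frn \<pi> \<phi>). n + m \<le> i \<longrightarrow> e' i \<in> C"
    proof (intro ballI impI)
      fix i assume i: "i \<in> fvars (frn \<pi> \<phi>)" "n + m \<le> i"
      then obtain j where j: "j \<in> fvars \<phi>" "i = \<pi> j" using fvars_frn[OF inj] by auto
      then have "n \<le> j" "i = j + m" using i(2) unfolding \<pi>_def by (auto split: if_splits)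
      then show "e' i \<in> C" using j 1(1) unfolding e'_def by auto
    qed
    show "cyl n m S = {a \<in> tuples (n + m). sat M (env (n + m) a e') (frn \<pi> \<phi>)}"
      unfolding cyl_def 1(2) using envc by (auto simp: sat_frn[OF inj] tuples_len)
  qed
qed

lemma defin_proj:
  assumes p: "p \<in> defin M (n + m) C"
  shows "take n ` p \<in> defin M n C"
proof -
  obtain \<phi> e where 1: "\<forall>i\<in>fvars \<phi>. n + m \<le> i \<longrightarrow> e i \<in> C" "p = {a \<in> tuples (n + m). sat M (env (n + m) a e) \<phi>}"
    using p by (rule definE)
  show ?thesis
  proof (rule definI[of "foldr Ex [n..<n+m] \<phi>" n e])
    show "\<forall>i\<in>fvars (foldr Ex [n..<n + m] \<phi>). n \<le> i \<longrightarrow> e i \<in> C"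
      using 1(1) by (auto simp: fvars_exs)
    show "take n ` p = {a \<in> tuples n. sat M (env n a e) (foldr Ex [n..<n + m] \<phi>)}"
    proof (intro set_eqI iffI)
      fix a assume "a \<in> take n ` p"
      then obtain b where b: "b \<in> p" "a = take n b" by blast
      then have lb: "length b = n + m" "sat M (env (n + m) b e) \<phi>" using 1(2) tuples_len by auto
      have "\<forall>i. i \<notin> set [n..<n+m] \<longrightarrow> env (n + m) b e i = env n a e i"
        using lb b(2) unfolding env_def by auto
      then show "a \<in> {a \<in> tuples n. sat M (env n a e) (foldr Ex [n..<n + m] \<phi>)}"
        using lb b(2) by (auto simp: sat_exs tuples_len)
    next
      fix a assume "a \<in> {a \<in> tuples n. sat M (env n a e) (foldr Ex [n..<n + m] \<phi>)}"
      then obtain g where a: "length a = n" "\<forall>i. i \<notin> set [n..<n+m] \<longrightarrow> g i = env n a e i" "sat M g \<phi>"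
        by (auto simp: sat_exs tuples_len)
      define b where "b = a @ map g [n..<n+m]"
      have lb: "length b = n + m" unfolding b_def using a(1) by simp
      have "env (n + m) b e = g"
      proof
        fix i show "env (n + m) b e i = g i"
        proof (cases "i < n")
          case True
          then show ?thesis using a unfolding env_def b_def by (auto simp: nth_append)
        next
          case False
          then show ?thesis using a unfolding env_def b_def by (auto simp: nth_append)
        qed
      qed
      then have "b \<in> p" using 1(2) lb a(3) by (simp add: tuples_len)
      moreover have "take n b = a" unfolding b_def using a(1) by simp
      ultimately show "a \<in> take n ` p" by (metis image_eqI)
    qed
  qed
qed

lemma fa_eq: "fa = fa_prob" by (intro ext) (simp add: fa_def fa_prob_def)

lemma take_tuples: "a \<in> tuples (n + m) \<Longrightarrow> take n a \<in> tuples n"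
  by (simp add: tuples_len)

lemma take_cyl:
  assumes "S \<subseteq> tuples n" shows "take n ` cyl n m S = S"
proof
  show "take n ` cyl n m S \<subseteq> S" unfolding cyl_def by auto
  show "S \<subseteq> take n ` cyl n m S"
  proof
    fix a assume a: "a \<in> S"
    then have la: "length a = n" using assms by (auto simp: tuples_len)
    define b where "b = a @ replicate m undefined"
    have "b \<in> cyl n m S" unfolding cyl_def b_def using a la by (simp add: tuples_len)
    moreover have "take n b = a" unfolding b_def using la by simp
    ultimately show "a \<in> take n ` cyl n m S" by (metis image_eqI)
  qed
qed

lemma cyl_Int: "cyl n m (S \<inter> T) = cyl n m S \<inter> cyl n m T" unfolding cyl_def by auto
lemma cyl_Un: "cyl n m (S \<union> T) = cyl n m S \<union> cyl n m T" unfolding cyl_def by auto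
lemma cyl_compl: "cyl n m (tuples n - S) = tuples (n + m) - cyl n m S"
  unfolding cyl_def using take_tuples by auto
lemma cyl_top: "cyl n m (tuples n) = tuples (n + m)"
  unfolding cyl_def using take_tuples by auto
lemma cyl_sub: "cyl n m S \<subseteq> tuples (n + m)" unfolding cyl_def by auto
lemma pi_x_cyl: "pi_x n m \<omega> S = \<omega> (cyl n m S)" unfolding pi_x_def cyl_def by simp

theorem lemma3p8:
  fixes M :: "('f, 'r, 'u) struct" and K :: "'k set"
    and A B :: "'u set" and n m :: nat
    and \<mu> \<nu> :: "'u list set \<Rightarrow> real"
  assumes "monster M K"
    and "small K A" and "small K B" and "A \<subseteq> B"
    and "keisler M n UNIV \<mu>" and "keisler M m UNIV \<nu>"
    and "geE M n m A \<mu> \<nu>"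
  shows "geE M n m B \<mu> \<nu>"
proof -
  obtain lam where L1: "keisler M (n + m) A lam" and L2: "agree (defin M n A) (pi_x n m lam) \<mu>"
    and H: "\<And>\<omega>. keisler M (n + m) UNIV \<omega> \<Longrightarrow> agree (defin M (n + m) A) \<omega> lam \<Longrightarrow>
             agree (defin M n UNIV) (pi_x n m \<omega>) \<mu> \<Longrightarrow> agree (defin M m UNIV) (pi_y n m \<omega>) \<nu>"
    using assms(7) unfolding geE_def by blast
  define X where "X = (tuples (n + m) :: 'u list set)"
  define R where "R = defin M (n + m) (UNIV :: 'u set)"
  define P where "P = defin M (n + m) A"
  define D where "D = defin M n (UNIV :: 'u set)"
  define Q where "Q = cyl n m ` D"
  define kap where "kap = (\<lambda>T. \<mu> (take n ` T))"
  have AR: "alg X R" unfolding X_def R_def by (rule defin_alg)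
  have AP: "alg X P" unfolding X_def P_def by (rule defin_alg)
  have AD: "alg (tuples n) D" unfolding D_def by (rule defin_alg)
  have Dsub: "S \<subseteq> tuples n" if "S \<in> D" for S using that algD(1)[OF AD] by blast
  have kapc: "kap (cyl n m S) = \<mu> S" if "S \<in> D" for S unfolding kap_def using take_cyl[OF Dsub[OF that]] by simp
  have AQ: "alg X Q" unfolding alg_def
  proof (intro conjI ballI)
    show "Q \<subseteq> Pow X" unfolding Q_def X_def using cyl_sub by blast
    show "X \<in> Q" unfolding Q_def X_def using cyl_top[of n m] algD(2)[OF AD] by (metis image_eqI)
    show "X - S \<in> Q" if SQ: "S \<in> Q" for S
    proof -
      obtain S0 where "S0 \<in> D" "S = cyl n m S0" using SQ unfolding Q_def by blast
      then show ?thesis unfolding Q_def X_def using cyl_compl[of n m S0] algD(3)[OF AD] by (metis image_eqI)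
    qed
    show "S \<inter> T \<in> Q" if ST: "S \<in> Q" "T \<in> Q" for S T
    proof -
      obtain S0 where "S0 \<in> D" "S = cyl n m S0" using ST unfolding Q_def by blast
      moreover obtain T0 where "T0 \<in> D" "T = cyl n m T0" using ST unfolding Q_def by blast
      ultimately show ?thesis unfolding Q_def using cyl_Int[of n m S0 T0] algD(4)[OF AD] by (metis image_eqI)
    qed
  qed
  have PR: "P \<subseteq> R" unfolding P_def R_def by (rule defin_mono) simp
  have QR: "Q \<subseteq> R" unfolding Q_def R_def D_def using defin_cyl by blast
  have MP: "fa P X lam" using L1 unfolding P_def X_def keisler_def fa_eq .
  have MD: "fa D (tuples n) \<mu>" using assms(5) unfolding D_def keisler_def fa_eq .
  have MQ: "fa Q X kap" unfolding fa_def
  proof (intro conjI ballI impI)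
    have "kap (cyl n m (tuples n)) = 1" using kapc[OF algD(2)[OF AD]] MD unfolding fa_def by simp
    then show "kap X = 1" unfolding X_def cyl_top .
    show "0 \<le> kap S" if "S \<in> Q" for S
      using that kapc fa_nonneg[OF AD MD] unfolding Q_def by auto
    show "kap (S \<union> T) = kap S + kap T" if ST: "S \<in> Q" "T \<in> Q" "S \<inter> T = {}" for S T
    proof -
      obtain S0 where S0: "S0 \<in> D" "S = cyl n m S0" using ST unfolding Q_def by blast
      obtain T0 where T0: "T0 \<in> D" "T = cyl n m T0" using ST unfolding Q_def by blast
      have "S0 \<inter> T0 = take n ` cyl n m (S0 \<inter> T0)" using take_cyl[of "S0 \<inter> T0" n m] Dsub[OF S0(1)] by blast
      also have "\<dots> = {}" using ST(3) S0 T0 cyl_Int[of n m S0 T0] by simp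
      finally have d: "S0 \<inter> T0 = {}" .
      have "S0 \<union> T0 \<in> D" using alg_Un[OF AD S0(1) T0(1)] .
      then have "kap (S \<union> T) = \<mu> (S0 \<union> T0)" using kapc[of "S0 \<union> T0"] S0(2) T0(2) cyl_Un[of n m S0 T0] by simp
      also have "\<dots> = \<mu> S0 + \<mu> T0" using fa_add[OF AD MD S0(1) T0(1) d] .
      finally show ?thesis using kapc S0 T0 by simp
    qed
  qed
  have cons: "lam p \<le> kap q" if p: "p \<in> P" and q: "q \<in> Q" and pq: "p \<subseteq> q" for p q
  proof -
    obtain S where S: "S \<in> D" "q = cyl n m S" using q unfolding Q_def by blast
    define pp where "pp = take n ` p"
    have ppA: "pp \<in> defin M n A" unfolding pp_def using defin_proj p unfolding P_def by blast
    have ppD: "pp \<in> D" using ppA defin_mono[of A UNIV M n] unfolding D_def by blast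
    have cpp: "cyl n m pp \<in> P" unfolding P_def using defin_cyl[OF ppA] .
    have psub: "p \<subseteq> X" using p algD(1)[OF AP] by blast
    have "p \<subseteq> cyl n m pp" unfolding cyl_def pp_def using psub unfolding X_def by auto
    then have "lam p \<le> lam (cyl n m pp)" using fa_mono[OF AP MP p cpp] by simp
    also have "\<dots> = \<mu> pp" using L2 ppA unfolding agree_def pi_x_cyl by simp
    also have "\<dots> \<le> \<mu> S"
    proof (rule fa_mono[OF AD MD ppD S(1)])
      show "pp \<subseteq> S" unfolding pp_def using pq S(2) unfolding cyl_def by auto
    qed
    also have "\<dots> = kap q" using kapc[OF S(1)] S(2) by simp
    finally show ?thesis .
  qed
  obtain \<omega> where W: "fa R X \<omega>" "\<forall>p\<in>P. \<omega> p = lam p" "\<forall>q\<in>Q. \<omega> q = kap q"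
    using amalg[OF AR AP AQ PR QR MP MQ cons] by blast
  have BR: "defin M (n + m) B \<subseteq> R" unfolding R_def by (rule defin_mono) simp
  have AB: "defin M (n + m) A \<subseteq> defin M (n + m) B" by (rule defin_mono[OF assms(4)])
  show ?thesis unfolding geE_def
  proof (intro exI conjI allI impI)
    show "keisler M (n + m) B \<omega>" unfolding keisler_def fa_eq[symmetric]
      using W(1) BR unfolding fa_def X_def by blast
    show "agree (defin M n B) (pi_x n m \<omega>) \<mu>" unfolding agree_def
    proof
      fix S assume "S \<in> defin M n B"
      then have SD: "S \<in> D" unfolding D_def using defin_mono[of B UNIV M n] by blast
      then have "cyl n m S \<in> Q" unfolding Q_def by blast
      then show "pi_x n m \<omega> S = \<mu> S" unfolding pi_x_cyl using W(3) kapc[OF SD] by simp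
    qed
    fix \<omega>' assume k: "keisler M (n + m) UNIV \<omega>'" and a1: "agree (defin M (n + m) B) \<omega>' \<omega>"
      and a2: "agree (defin M n UNIV) (pi_x n m \<omega>') \<mu>"
    have "agree (defin M (n + m) A) \<omega>' lam" unfolding agree_def
    proof
      fix S assume S: "S \<in> defin M (n + m) A"
      then have "\<omega>' S = \<omega> S" using a1 AB unfolding agree_def by blast
      also have "\<dots> = lam S" using W(2) S unfolding P_def by blast
      finally show "\<omega>' S = lam S" .
    qed
    then show "agree (defin M m UNIV) (pi_y n m \<omega>') \<nu>" using H k a2 by blast
  qed
qed

end
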